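(* Let $0\le\lambda<\gamma\le\delta$ and let $\mathfrak{f}=\mathfrak{s}+\overline{\mathfrak{t}}\in\mathcal{R}_H^0(\gamma,\delta,\lambda)$ with $\mathfrak{t}(z)=\sum_{m\ge2}b_mz^m$. Then for every $m\ge2$, $$|b_m|\le\frac{2(\gamma-\lambda)}{m^2[2\gamma+(\delta-\gamma)(m-1)]}.$$ The result is sharp: equality holds for the function $\mathfrak{f}(z)=z+\frac{2(\gamma-\lambda)}{m^2[2\gamma+(\delta-\gamma)(m-1)]}\bar z^m$.
   Context: Let $\mathcal{U}=\{z\in\mathbb{C}:|z|<1\}$. $\mathcal{H}^0$ denotes the class of complex-valued harmonic functions $\mathfrak{f}=\mathfrak{s}+\overline{\mathfrak{t}}$ on $\mathcal{U}$, where $\mathfrak{s}(z)=z+\sum_{m\ge2}a_mz^m$ and $\mathfrak{t}(z)=\sum_{m\ge2}b_mz^m$ are analytic in $\mathcal{U}$. For real $0\le\lambda<\gamma\le\delta$, $\mathcal{R}_H^0(\gamma,\delta,\lambda)$ is the class of $\mathfrak{f}=\mathfrak{s}+\overline{\mathfrak{t}}\in\mathcal{H}^0$ such that for all $z\in\mathcal{U}$, $\mathrm{Re}\left[\gamma\mathfrak{s}'(z)+\delta z\mathfrak{s}''(z)+\frac{\delta-\gamma}{2}z^2\mathfrak{s}'''(z)-\lambda\right]>\left|\gamma\mathfrak{t}'(z)+\delta z\mathfrak{t}''(z)+\frac{\delta-\gamma}{2}z^2\mathfrak{t}'''(z)\right|$. *)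

theory Defs
  imports "HOL-Analysis.Analysis"
begin

abbreviation unit_disk :: "complex set" where
  "unit_disk \<equiv> ball 0 1"

definition taylor_coeff :: "(complex \<Rightarrow> complex) \<Rightarrow> nat \<Rightarrow> complex" where
  "taylor_coeff g m = (deriv ^^ m) g 0 / of_nat (fact m)"

text \<open>The class H^0: f = s + conj t with s(z) = z + sum a_m z^m, t(z) = sum_{m>=2} b_m z^m
  analytic on U. A harmonic function is represented by the pair (s, t).\<close>
definition H0 :: "(complex \<Rightarrow> complex) \<Rightarrow> (complex \<Rightarrow> complex) \<Rightarrow> bool" where
  "H0 s t \<longleftrightarrow> s holomorphic_on unit_disk \<and> t holomorphic_on unit_disk \<and>
     s 0 = 0 \<and> deriv s 0 = 1 \<and> t 0 = 0 \<and> deriv t 0 = 0"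

definition Lop :: "real \<Rightarrow> real \<Rightarrow> (complex \<Rightarrow> complex) \<Rightarrow> complex \<Rightarrow> complex" where
  "Lop \<gamma> \<delta> g z = of_real \<gamma> * deriv g z + of_real \<delta> * z * (deriv ^^ 2) g z
     + of_real ((\<delta> - \<gamma>) / 2) * z^2 * (deriv ^^ 3) g z"

definition RH0 :: "real \<Rightarrow> real \<Rightarrow> real \<Rightarrow> (complex \<Rightarrow> complex) \<Rightarrow> (complex \<Rightarrow> complex) \<Rightarrow> bool" where
  "RH0 \<gamma> \<delta> lam s t \<longleftrightarrow> H0 s t \<and>
     (\<forall>z\<in>unit_disk. Re (Lop \<gamma> \<delta> s z - of_real lam) > cmod (Lop \<gamma> \<delta> t z))"

end

theory Submission
  imports Defs "HOL-Complex_Analysis.Complex_Analysis"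
begin


lemma coeff_bound_r:
  fixes q p :: "complex \<Rightarrow> complex"
  assumes hq: "q holomorphic_on ball 0 1" and hp: "p holomorphic_on ball 0 1"
    and le: "\<And>z. z \<in> ball 0 1 \<Longrightarrow> cmod (q z) \<le> Re (p z)"
    and r: "0 < r" "r < 1"
  shows "cmod ((deriv ^^ k) q 0 / fact k) * r ^ k \<le> Re (p 0)"
proof -
  define g where "g = circlepath (0::complex) r"
  have sub: "cball (0::complex) r \<subseteq> ball 0 1" using r by auto
  have cq: "continuous_on (cball 0 r) q"
    using holomorphic_on_imp_continuous_on[OF hq] sub continuous_on_subset by blast
  have cp: "continuous_on (cball 0 r) p"
    using holomorphic_on_imp_continuous_on[OF hp] sub continuous_on_subset by blast
  have hq': "q holomorphic_on ball 0 r" by (meson hq ball_subset_cball holomorphic_on_subset subset_trans sub)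
  have hp': "p holomorphic_on ball 0 r" by (meson hp ball_subset_cball holomorphic_on_subset subset_trans sub)
  have c0: "(0::complex) \<in> ball 0 r" using r by simp
  have Iq: "((\<lambda>u. q u / (u - 0) ^ Suc k) has_contour_integral
        (2 * pi * \<i> / fact k * (deriv ^^ k) q 0)) g"
    unfolding g_def by (rule Cauchy_has_contour_integral_higher_derivative_circlepath[OF cq hq' c0])
  have Ip: "((\<lambda>u. p u / (u - 0) ^ Suc 0) has_contour_integral
        (2 * pi * \<i> / fact 0 * (deriv ^^ 0) p 0)) g"
    unfolding g_def by (rule Cauchy_has_contour_integral_higher_derivative_circlepath[OF cp hp' c0])
  define e where "e x = exp (2 * of_real pi * \<i> * of_real x)" for x :: real
  have ge: "g x = of_real r * e x" for x unfolding g_def e_def circlepath by simp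
  have ne: "cmod (e x) = 1" for x unfolding e_def by (simp add: norm_exp_eq_Re)
  have vd: "vector_derivative g (at x within {0..1}) = 2 * pi * \<i> * r * e x" if "x \<in> {0..1}" for x
    using that by (simp add: g_def vector_derivative_circlepath01 e_def)
  have enz: "e x \<noteq> 0" for x using ne[of x] by auto
  have gin: "g x \<in> ball 0 1" for x using ge ne r by (simp add: norm_mult)
  define F where "F x = q (g x) / (g x) ^ Suc k * (2 * pi * \<i> * r * e x)" for x
  have IF: "(F has_integral (2 * pi * \<i> / fact k * (deriv ^^ k) q 0)) {0..1}"
    using Iq unfolding has_contour_integral_def
    by (rule has_integral_eq[rotated]) (simp add: F_def vd)
  have IP0: "((\<lambda>x. 2 * pi * \<i> * p (g x)) has_integral (2 * pi * \<i> * p 0)) {0..1}"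
  proof -
    have "((\<lambda>x. p (g x) / (g x - 0) ^ Suc 0 * vector_derivative g (at x within {0..1})) has_integral
        (2 * pi * \<i> * p 0)) {0..1}"
      using Ip unfolding has_contour_integral_def by simp
    then show ?thesis
    apply (rule has_integral_eq[rotated])
    using r ne by (auto simp: vd ge enz)
  qed
  have IP1: "((\<lambda>x. p (g x)) has_integral p 0) {0..1}"
    using has_integral_mult_right[OF IP0, of "1 / (2 * pi * \<i>)"] by simp
  have IP: "((\<lambda>x. Re (p (g x))) has_integral Re (p 0)) {0..1}"
    using has_integral_linear[OF IP1 bounded_linear_Re] by (simp add: o_def)
  have IB: "((\<lambda>x. (2 * pi / r ^ k) * Re (p (g x))) has_integral ((2 * pi / r ^ k) * Re (p 0))) {0..1}"
    by (rule has_integral_mult_right[OF IP])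
  have nF: "norm (F x) \<le> (2 * pi / r ^ k) * Re (p (g x))" for x
  proof -
    have "norm (F x) = cmod (q (g x)) * (2 * pi / r ^ k)"
      using r ne enz unfolding F_def ge
      by (simp add: norm_mult norm_divide norm_power field_simps)
    also have "\<dots> \<le> Re (p (g x)) * (2 * pi / r ^ k)"
      using le[OF gin] r by (intro mult_right_mono) auto
    finally show ?thesis by (simp add: mult.commute)
  qed
  have "norm (integral {0..1} F) \<le> integral {0..1} (\<lambda>x. (2 * pi / r ^ k) * Re (p (g x)))"
    by (rule integral_norm_bound_integral) (use IF IB nF in auto)
  then have "norm (2 * pi * \<i> / fact k * (deriv ^^ k) q 0) \<le> (2 * pi / r ^ k) * Re (p 0)"
    using integral_unique[OF IF] integral_unique[OF IB] integral_unique[OF IP] r by simp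
  then have "2 * pi * cmod ((deriv ^^ k) q 0 / fact k) \<le> (2 * pi / r ^ k) * Re (p 0)"
    by (simp add: norm_mult norm_divide)
  then have "2 * pi * cmod ((deriv ^^ k) q 0 / fact k) \<le> 2 * pi * (Re (p 0) / r ^ k)"
    by simp
  then have "cmod ((deriv ^^ k) q 0 / fact k) \<le> Re (p 0) / r ^ k"
    using pi_gt_zero by (subst (asm) mult_le_cancel_left_pos) auto
  then show ?thesis using r by (simp add: field_simps)
qed

lemma coeff_bound:
  fixes q p :: "complex \<Rightarrow> complex"
  assumes hq: "q holomorphic_on ball 0 1" and hp: "p holomorphic_on ball 0 1"
    and le: "\<And>z. z \<in> ball 0 1 \<Longrightarrow> cmod (q z) \<le> Re (p z)"
  shows "cmod ((deriv ^^ k) q 0 / fact k) \<le> Re (p 0)"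
proof -
  define X where "X = cmod ((deriv ^^ k) q 0 / fact k)"
  have "((\<lambda>r. X * r ^ k) \<longlongrightarrow> X * 1 ^ k) (at_left (1::real))"
    by (intro tendsto_intros)
  moreover have "eventually (\<lambda>r. X * r ^ k \<le> Re (p 0)) (at_left (1::real))"
    using eventually_at_left_real[of 0 "1::real"]
    by (rule eventually_mono) (use coeff_bound_r[OF hq hp le] X_def in auto)
  ultimately have "X * 1 ^ k \<le> Re (p 0)"
    by (rule tendsto_upperbound) (simp add: trivial_limit_at_left_real)
  then show ?thesis by (simp add: X_def)
qed



lemma hd_comp: "(deriv ^^ a) ((deriv ^^ b) t) = (deriv ^^ (a + b)) t"
  by (simp add: funpow_add)

lemma hd_sq0: "(deriv ^^ j) (\<lambda>w::complex. w ^ 2) 0 = (if j = 2 then 2 else 0)"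
proof -
  have "(deriv ^^ j) (\<lambda>w::complex. (w - 0) ^ 2) 0 = pochhammer (of_nat (Suc 2 - j)) j * (0 - 0) ^ (2 - j)"
    by (rule higher_deriv_power)
  moreover have "pochhammer (of_nat (Suc 2 - j)) j * (0::complex) ^ (2 - j) = (if j = 2 then 2 else 0)"
  proof (cases "j \<le> 2")
    case True then have "j = 0 \<or> j = 1 \<or> j = 2" by auto
    then show ?thesis by (auto simp: pochhammer_Suc numeral_2_eq_2)
  next
    case False then show ?thesis by (auto simp: pochhammer_0_left)
  qed
  ultimately show ?thesis by simp
qed

lemma Lop_hd:
  fixes t :: "complex \<Rightarrow> complex"
  assumes ht: "t holomorphic_on ball 0 1" and k: "k \<ge> 1"
  shows "(deriv ^^ k) (Lop \<gamma> \<delta> t) 0 =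
     of_real (\<gamma> + \<delta> * k + (\<delta> - \<gamma>) / 2 * k * (k - 1)) * (deriv ^^ Suc k) t 0"
proof -
  define c :: complex where "c = of_real ((\<delta> - \<gamma>) / 2)"
  have o: "open (ball (0::complex) 1)" by simp
  have z: "(0::complex) \<in> ball 0 1" by simp
  have h1: "deriv t holomorphic_on ball 0 1" using holomorphic_deriv[OF ht o] by blast
  have h2: "(deriv ^^ 2) t holomorphic_on ball 0 1" using holomorphic_higher_deriv[OF ht o] by blast
  have h3: "(deriv ^^ 3) t holomorphic_on ball 0 1" using holomorphic_higher_deriv[OF ht o] by blast
  have hA: "(\<lambda>z. of_real \<gamma> * deriv t z) holomorphic_on ball 0 1" using ht h1 by (auto intro!: holomorphic_intros)
  have hB: "(\<lambda>z. of_real \<delta> * z * (deriv ^^ 2) t z) holomorphic_on ball 0 1" using ht h2 by (auto intro!: holomorphic_intros)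
  have hC: "(\<lambda>z. c * z^2 * (deriv ^^ 3) t z) holomorphic_on ball 0 1" using ht h3 by (auto intro!: holomorphic_intros)
  have hsq: "(\<lambda>z::complex. z^2) holomorphic_on UNIV" by (intro holomorphic_intros)
  have L: "Lop \<gamma> \<delta> t = (\<lambda>z. (of_real \<gamma> * deriv t z + of_real \<delta> * z * (deriv ^^ 2) t z) + c * z^2 * (deriv ^^ 3) t z)"
    unfolding Lop_def c_def by (rule ext) simp
  have "(deriv ^^ k) (Lop \<gamma> \<delta> t) 0 =
     (deriv ^^ k) (\<lambda>z. of_real \<gamma> * deriv t z) 0 + (deriv ^^ k) (\<lambda>z. of_real \<delta> * z * (deriv ^^ 2) t z) 0
     + (deriv ^^ k) (\<lambda>z. c * z^2 * (deriv ^^ 3) t z) 0"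
    unfolding L
    by (subst higher_deriv_add[OF holomorphic_on_add[OF hA hB] hC o z],
        subst higher_deriv_add[OF hA hB o z]) (rule refl)
  also have "(deriv ^^ k) (\<lambda>z. of_real \<gamma> * deriv t z) 0 = of_real \<gamma> * (deriv ^^ Suc k) t 0"
    using higher_deriv_cmult[OF h1 z o, of k "of_real \<gamma>"] hd_comp[of k 1 t] by simp
  also have "(deriv ^^ k) (\<lambda>z. of_real \<delta> * z * (deriv ^^ 2) t z) 0 = of_real \<delta> * of_nat k * (deriv ^^ Suc k) t 0"
  proof -
    have "(deriv ^^ k) (\<lambda>z. of_real \<delta> * z * (deriv ^^ 2) t z) 0 =
       (\<Sum>i = 0..k. of_nat (k choose i) * (deriv ^^ i) (\<lambda>z. of_real \<delta> * z) 0 * (deriv ^^ (k - i)) ((deriv ^^ 2) t) 0)"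
      by (rule higher_deriv_mult[OF _ h2 o z]) (intro holomorphic_intros)
    also have "\<dots> = (\<Sum>i = 0..k. if i = 1 then of_nat k * of_real \<delta> * (deriv ^^ Suc k) t 0 else 0)"
    proof (intro sum.cong refl)
      fix i assume "i \<in> {0..k}"
      have e2: "(deriv ^^ (k - 1)) ((deriv ^^ 2) t) = (deriv ^^ Suc k) t"
        using hd_comp[of "k-1" 2 t] k by (simp add: Suc_diff_le del: funpow.simps)
      show "of_nat (k choose i) * (deriv ^^ i) (\<lambda>z. of_real \<delta> * z) 0 * (deriv ^^ (k - i)) ((deriv ^^ 2) t) 0 =
        (if i = 1 then of_nat k * of_real \<delta> * (deriv ^^ Suc k) t 0 else 0)"
        by (cases "i = 1") (simp_all only: e2, simp_all)
    qed
    also have "\<dots> = of_nat k * of_real \<delta> * (deriv ^^ Suc k) t 0"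
      using k by (subst sum.delta) auto
    finally show ?thesis by simp
  qed
  also have "(deriv ^^ k) (\<lambda>z. c * z^2 * (deriv ^^ 3) t z) 0 = c * of_nat k * (of_nat k - 1) * (deriv ^^ Suc k) t 0"
  proof -
    have "(deriv ^^ k) (\<lambda>z. c * z^2 * (deriv ^^ 3) t z) 0 =
       (\<Sum>i = 0..k. of_nat (k choose i) * (deriv ^^ i) (\<lambda>z. c * z^2) 0 * (deriv ^^ (k - i)) ((deriv ^^ 3) t) 0)"
      by (rule higher_deriv_mult[OF _ h3 o z]) (intro holomorphic_intros)
    also have "\<dots> = (\<Sum>i = 0..k. if i = 2 then of_nat (k choose 2) * (c * 2) * (deriv ^^ (k - 2 + 3)) t 0 else 0)"
      apply (intro sum.cong refl)
      apply (subst higher_deriv_cmult[of "\<lambda>z. z^2" UNIV])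
      using hsq by (auto simp: hd_comp hd_sq0)
    also have "\<dots> = (if 2 \<le> k then of_nat (k choose 2) * (c * 2) * (deriv ^^ (k - 2 + 3)) t 0 else 0)"
      by (subst sum.delta) auto
    also have "\<dots> = c * of_nat k * (of_nat k - 1) * (deriv ^^ Suc k) t 0"
    proof (cases "2 \<le> k")
      case True
      have kk: "k - 2 + 3 = Suc k" using True by simp
      have eq: "of_nat (k choose 2) * 2 = (of_nat k * (of_nat k - 1) :: complex)"
      proof -
        have ev: "even (k * (k - 1))" by (cases k) auto
        have "(k choose 2) * 2 = k * (k - 1)" using ev by (simp add: choose_two)
        then have "of_nat ((k choose 2) * 2) = (of_nat (k * (k - 1)) :: complex)" by simp
        then show ?thesis using True by (simp add: of_nat_diff)
      qed
      have "(if 2 \<le> k then of_nat (k choose 2) * (c * 2) * (deriv ^^ (k - 2 + 3)) t 0 else 0)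
          = c * (of_nat (k choose 2) * 2) * (deriv ^^ Suc k) t 0"
        using True by (simp only: kk if_True mult_ac)
      also have "\<dots> = c * of_nat k * (of_nat k - 1) * (deriv ^^ Suc k) t 0"
        by (subst eq) (simp only: mult_ac)
      finally show ?thesis .
    next
      case False
      then have "k = 1" using k by simp
      then show ?thesis by simp
    qed
    finally show ?thesis .
  qed
  finally show ?thesis unfolding c_def using k by (simp add: algebra_simps of_nat_diff)
qed



lemma Lop_holo:
  assumes "g holomorphic_on ball 0 1"
  shows "Lop \<gamma> \<delta> g holomorphic_on ball 0 1"
proof -
  have o: "open (ball (0::complex) 1)" by simp
  have h1: "deriv g holomorphic_on ball 0 1" using holomorphic_deriv[OF assms o] by blast
  have h2: "(deriv ^^ 2) g holomorphic_on ball 0 1" using holomorphic_higher_deriv[OF assms o] by blast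
  have h3: "(deriv ^^ 3) g holomorphic_on ball 0 1" using holomorphic_higher_deriv[OF assms o] by blast
  show ?thesis unfolding Lop_def
    by (intro holomorphic_on_add holomorphic_on_mult holomorphic_on_const holomorphic_on_id
        holomorphic_on_power holomorphic_on_ident h1 h2 h3)
qed

lemma part1:
  fixes \<gamma> \<delta> lam :: real
  assumes "0 \<le> lam" and "lam < \<gamma>" and "\<gamma> \<le> \<delta>"
    and R: "RH0 \<gamma> \<delta> lam s t" and m: "m \<ge> 2"
  shows "cmod (taylor_coeff t m)
                 \<le> 2 * (\<gamma> - lam) / ((real m)^2 * (2 * \<gamma> + (\<delta> - \<gamma>) * (real m - 1)))"
proof -
  have hs: "s holomorphic_on ball 0 1" and ht: "t holomorphic_on ball 0 1" and ds: "deriv s 0 = 1"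
    using R unfolding RH0_def H0_def by auto
  have strict: "\<And>z. z \<in> ball 0 1 \<Longrightarrow> Re (Lop \<gamma> \<delta> s z - of_real lam) > cmod (Lop \<gamma> \<delta> t z)"
    using R unfolding RH0_def by auto
  define k where "k = m - 1"
  have k1: "k \<ge> 1" and mk: "m = Suc k" using m by (auto simp: k_def)
  have hp: "(\<lambda>z. Lop \<gamma> \<delta> s z - of_real lam) holomorphic_on ball 0 1"
    using Lop_holo[OF hs] by (intro holomorphic_intros)
  have cb: "cmod ((deriv ^^ k) (Lop \<gamma> \<delta> t) 0 / fact k) \<le> Re ((\<lambda>z. Lop \<gamma> \<delta> s z - of_real lam) 0)"
    by (rule coeff_bound[OF Lop_holo[OF ht] hp]) (use strict in fastforce)
  have p0: "Re ((\<lambda>z. Lop \<gamma> \<delta> s z - of_real lam) 0) = \<gamma> - lam"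
    by (simp add: Lop_def ds)
  define D where "D = (deriv ^^ m) t 0"
  define K where "K = \<gamma> + \<delta> * k + (\<delta> - \<gamma>) / 2 * k * (k - 1)"
  have hd: "(deriv ^^ k) (Lop \<gamma> \<delta> t) 0 = of_real K * D"
    unfolding K_def D_def mk by (rule Lop_hd[OF ht k1])
  define B where "B = 2 * \<gamma> + (\<delta> - \<gamma>) * (real m - 1)"
  have Bpos: "B > 0" unfolding B_def using assms m by (smt (verit) mult_nonneg_nonneg of_nat_1 of_nat_le_iff one_le_numeral order_trans)
  have KB: "K = real m * B / 2" using k1 unfolding K_def B_def mk by (simp add: of_nat_diff field_simps)
  have Kpos: "K > 0" unfolding KB using Bpos m by simp
  define a where "a = cmod D / fact k"
  have "cmod ((deriv ^^ k) (Lop \<gamma> \<delta> t) 0 / fact k) = K * a"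
    unfolding hd a_def using Kpos by (simp add: norm_mult norm_divide)
  then have Ka: "K * a \<le> \<gamma> - lam" using cb p0 by simp
  have tc: "cmod (taylor_coeff t m) = a / real m"
  proof -
    have "cmod (taylor_coeff t m) = cmod D / fact m"
      unfolding taylor_coeff_def D_def by (simp add: norm_divide norm_fact)
    also have "fact m = real m * fact k" unfolding mk by (simp add: fact_Suc)
    finally show ?thesis unfolding a_def by simp
  qed
  have "a / real m \<le> (\<gamma> - lam) / (K * real m)"
    using Ka Kpos m by (simp add: field_simps)
  also have "\<dots> = 2 * (\<gamma> - lam) / ((real m)^2 * B)"
    unfolding KB by (simp add: field_simps power2_eq_square)
  finally show ?thesis using tc B_def by simp
qed



lemma hd_pow:
  "(deriv ^^ j) (\<lambda>z::complex. a * z ^ m) w = a * pochhammer (of_nat (Suc m - j)) j * w ^ (m - j)"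
proof -
  have "(deriv ^^ j) (\<lambda>z::complex. a * z ^ m) w = a * (deriv ^^ j) (\<lambda>z::complex. (z - 0) ^ m) w"
    by (subst higher_deriv_cmult[of _ UNIV]) (auto intro!: holomorphic_intros)
  also have "\<dots> = a * (pochhammer (of_nat (Suc m - j)) j * (w - 0) ^ (m - j))"
    by (subst higher_deriv_power) (rule refl)
  finally show ?thesis by (simp add: mult.assoc)
qed

lemma part2:
  fixes \<gamma> \<delta> lam c :: real
  assumes "0 \<le> lam" and "lam < \<gamma>" and "\<gamma> \<le> \<delta>" and m: "m \<ge> 2"
    and c: "c = 2 * (\<gamma> - lam) / ((real m)^2 * (2 * \<gamma> + (\<delta> - \<gamma>) * (real m - 1)))"
  shows "RH0 \<gamma> \<delta> lam (\<lambda>z. z) (\<lambda>z. of_real c * z ^ m) \<and>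
                cmod (taylor_coeff (\<lambda>z. of_real c * z ^ m) m) = c"
proof -
  obtain n where mn: "m = Suc (Suc n)" using m by (metis add_2_eq_Suc le_Suc_ex)
  define t where "t = (\<lambda>z::complex. of_real c * z ^ m)"
  define B where "B = 2 * \<gamma> + (\<delta> - \<gamma>) * (real m - 1)"
  have Bpos: "B > 0" unfolding B_def using assms by (smt (verit) mult_nonneg_nonneg of_nat_1 of_nat_le_iff one_le_numeral order_trans)
  have cpos: "c \<ge> 0" unfolding c using Bpos B_def assms by simp
  have d1: "deriv t z = of_real c * of_nat (n+2) * z^(n+1)" for z
    using hd_pow[of 1 "of_real c" m z] unfolding t_def mn by simp
  have d2: "(deriv ^^ 2) t z = of_real c * of_nat ((n+1)*(n+2)) * z^n" for z
    using hd_pow[of 2 "of_real c" m z] unfolding t_def mn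
    by (simp add: pochhammer_Suc numeral_2_eq_2 algebra_simps)
  have d3: "z^2 * (deriv ^^ 3) t z = of_real c * of_nat (n*(n+1)*(n+2)) * z^(n+1)" for z
  proof -
    have "(deriv ^^ 3) t z = of_real c * pochhammer (of_nat n) 3 * z ^ (n - 1)"
      using hd_pow[of 3 "of_real c" m z] unfolding t_def mn by (simp add: numeral_3_eq_3)
    then show ?thesis
      by (cases n) (simp_all add: pochhammer_Suc numeral_3_eq_3 power2_eq_square algebra_simps)
  qed
  have Lt: "Lop \<gamma> \<delta> t z = of_real (\<gamma> - lam) * z ^ (m - 1)" for z
  proof -
    have "Lop \<gamma> \<delta> t z = of_real \<gamma> * deriv t z + of_real \<delta> * z * (deriv ^^ 2) t z
       + of_real ((\<delta> - \<gamma>) / 2) * (z^2 * (deriv ^^ 3) t z)"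
      unfolding Lop_def by (simp add: mult.assoc)
    also have "\<dots> = of_real (c * (n+2) * (\<gamma> + \<delta> * (n+1) + (\<delta> - \<gamma>) / 2 * n * (n+1))) * z^(n+1)"
      unfolding d1 d2 d3 by (simp add: field_simps)
    also have "c * (n+2) * (\<gamma> + \<delta> * (n+1) + (\<delta> - \<gamma>) / 2 * n * (n+1)) = \<gamma> - lam"
    proof -
      have "\<gamma> + \<delta> * (n+1) + (\<delta> - \<gamma>) / 2 * n * (n+1) = real m * B / 2"
        unfolding B_def mn by (simp add: field_simps)
      moreover have "real (n+2) = real m" using mn by simp
      ultimately have "c * (n+2) * (\<gamma> + \<delta> * (n+1) + (\<delta> - \<gamma>) / 2 * n * (n+1)) = c * (real m * (real m * B / 2))"
        by (metis mult.assoc of_nat_add)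
      also have "\<dots> = \<gamma> - lam" unfolding c B_def[symmetric] using Bpos m by (simp add: field_simps power2_eq_square)
      finally show ?thesis .
    qed
    finally show ?thesis using mn by simp
  qed
  have RH: "RH0 \<gamma> \<delta> lam (\<lambda>z. z) t"
    unfolding RH0_def H0_def
  proof (intro conjI ballI)
    show "(\<lambda>z. z) holomorphic_on ball 0 1" by (rule holomorphic_on_ident)
    show "t holomorphic_on ball 0 1" unfolding t_def by (intro holomorphic_intros)
    show "deriv (\<lambda>z::complex. z) 0 = 1" by simp
    show "t 0 = 0" unfolding t_def using m by simp
    show "deriv t 0 = 0" unfolding d1 by simp
  next
    fix z :: complex assume z: "z \<in> ball 0 1"
    have Ls: "Lop \<gamma> \<delta> (\<lambda>z. z) z = of_real \<gamma>"
      unfolding Lop_def by (simp add: numeral_2_eq_2 numeral_3_eq_3)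
    have "cmod (Lop \<gamma> \<delta> t z) = (\<gamma> - lam) * cmod z ^ (m - 1)"
      unfolding Lt using assms by (simp add: norm_mult norm_power del: of_real_diff)
    also have "\<dots> < (\<gamma> - lam) * 1"
    proof (rule mult_strict_left_mono)
      have "cmod z ^ (m - 1) < 1 ^ (m - 1)"
        using z m by (intro power_strict_mono) auto
      then show "cmod z ^ (m - 1) < 1" by simp
    qed (use assms in auto)
    finally show "Re (Lop \<gamma> \<delta> (\<lambda>z. z) z - of_real lam) > cmod (Lop \<gamma> \<delta> t z)"
      using Ls by simp
  qed simp
  have "taylor_coeff t m = of_real c"
    unfolding taylor_coeff_def using hd_pow[of m "of_real c" m 0] unfolding t_def
    by (simp add: pochhammer_fact[symmetric])
  then show ?thesis using RH cpos unfolding t_def by simp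
qed


theorem theorem6:
  fixes \<gamma> \<delta> lam :: real
  assumes "0 \<le> lam" and "lam < \<gamma>" and "\<gamma> \<le> \<delta>"
  shows "(\<forall>s t. RH0 \<gamma> \<delta> lam s t \<longrightarrow>
            (\<forall>m::nat. m \<ge> 2 \<longrightarrow>
               cmod (taylor_coeff t m)
                 \<le> 2 * (\<gamma> - lam) / ((real m)^2 * (2 * \<gamma> + (\<delta> - \<gamma>) * (real m - 1)))))
       \<and> (\<forall>m::nat. m \<ge> 2 \<longrightarrow>
            (let c = 2 * (\<gamma> - lam) / ((real m)^2 * (2 * \<gamma> + (\<delta> - \<gamma>) * (real m - 1)))
             in RH0 \<gamma> \<delta> lam (\<lambda>z. z) (\<lambda>z. of_real c * z ^ m) \<and>
                cmod (taylor_coeff (\<lambda>z. of_real c * z ^ m) m) = c))"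
  using part1[OF assms] part2[OF assms] by (auto simp: Let_def)

end
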